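(* Let $p$ be a prime, $k, r \geq 1$, $G_1, \dots, G_k$ finite-dimensional vector spaces over $\mathbb{F}_p$, $G^{\oplus} = G_1 \oplus \cdots \oplus G_k$ with each $G_i$ regarded as a subspace of $G^{\oplus}$, and $f \colon G^{\oplus} \to \mathbb{D}$. Let $\xi > 0$ and let $\psi \colon (G^{\oplus})^{r-1} \times G_1 \times \cdots \times G_k \to \mathbb{F}_p$ be a multilinear form such that \[\mathbb{E}_{a^{(1)}, \dots, a^{(r-1)} \in G^{\oplus},\ d_1 \in G_1, \dots, d_k \in G_k,\ x \in G^{\oplus}}\ \partial_{a^{(1)}} \cdots \partial_{a^{(r-1)}} \partial_{d_1} \cdots \partial_{d_k} f(x)\, \omega^{\psi(a^{(1)}, \dots, a^{(r-1)}, d_1, \dots, d_k)} \geq \xi,\] where $d_i \in G_i$ is viewed in $G^{\oplus}$. Let $i \in [r-1]$ and $j \in [k]$, and for $u \in G_j$ write $\iota_j(u) \in G^{\oplus}$ for the element with $j$-th component $u$ and all other components $0$. Define the multilinear form $\psi'_{ij} \colon (G^{\oplus})^{i-1} \times G_j \times (G^{\oplus})^{r-1-i} \times G_1 \times \cdots \times G_k \to \mathbb{F}_p$ by \begin{align*}\psi'_{ij}(a^{(1)}, \dots, a^{(i-1)}, u_j, a^{(i+1)}, \dots, a^{(r-1)}, d_1, \dots, d_k) =\ & \psi(a^{(1)}, \dots, a^{(i-1)}, \iota_j(u_j), a^{(i+1)}, \dots, a^{(r-1)}, d_1, \dots, d_{j-1}, d_j, d_{j+1}, \dots, d_k) \\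 &- \psi(a^{(1)}, \dots, a^{(i-1)}, \iota_j(d_j), a^{(i+1)}, \dots, a^{(r-1)}, d_1, \dots, d_{j-1}, u_j, d_{j+1}, \dots, d_k).\end{align*} Then $\operatorname{bias} \psi'_{ij} \geq \xi^8$.
   Context: $\mathbb{D} = \{z \in \mathbb{C} : |z| \leq 1\}$, $\omega = e^{2\pi i/p}$, $\mathbb{E}$ is the uniform average, $\partial_u f(x) = f(x+u)\overline{f(x)}$. For a multilinear form $\alpha$ on a product $V_1 \times \cdots \times V_s$ of $\mathbb{F}_p$-vector spaces, $\operatorname{bias}\alpha = \mathbb{E}_{v_1 \in V_1, \dots, v_s \in V_s} \omega^{\alpha(v_1, \dots, v_s)}$. *)

theory Defs
  imports "HOL-Analysis.Analysis" "Berlekamp_Zassenhaus.Finite_Field"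
begin

text \<open>A finite-dimensional F_p-space G_j is modelled as F_p^(n j).
  An element of the direct sum G_0 + ... + G_(k-1) is a function x with x j t the
  t-th coordinate of the j-th component (j < k, t < n j), and 0 outside this range.
  Each G_j is regarded (as in the paper) as the subspace of the direct sum whose
  components other than j vanish; so the embedding iota_j is the identity.\<close>

type_synonym 'p vec = "nat \<Rightarrow> nat \<Rightarrow> 'p mod_ring"

definition Gsum :: "(nat \<Rightarrow> nat) \<Rightarrow> nat \<Rightarrow> ('p::prime_card) vec set" where
  "Gsum n k = {x. \<forall>j t. (k \<le> j \<or> n j \<le> t) \<longrightarrow> x j t = 0}"

definition Gblock :: "(nat \<Rightarrow> nat) \<Rightarrow> nat \<Rightarrow> nat \<Rightarrow> ('p::prime_card) vec set" where
  "Gblock n k j = {x \<in> Gsum n k. \<forall>j' t. j' \<noteq> j \<longrightarrow> x j' t = 0}"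

definition vadd :: "('p::prime_card) vec \<Rightarrow> 'p vec \<Rightarrow> 'p vec" where
  "vadd x y = (\<lambda>j t. x j t + y j t)"

definition vscale :: "('p::prime_card) mod_ring \<Rightarrow> 'p vec \<Rightarrow> 'p vec" where
  "vscale c x = (\<lambda>j t. c * x j t)"

definition multilinear :: "('p::prime_card) vec set list \<Rightarrow> ('p vec list \<Rightarrow> 'p mod_ring) \<Rightarrow> bool" where
  "multilinear Vs \<alpha> \<longleftrightarrow>
     (\<forall>xs. list_all2 (\<in>) xs Vs \<longrightarrow>
       (\<forall>m < length Vs. \<forall>u \<in> Vs ! m. \<forall>v \<in> Vs ! m. \<forall>c.
          \<alpha> (xs[m := vadd u v]) = \<alpha> (xs[m := u]) + \<alpha> (xs[m := v]) \<and>
          \<alpha> (xs[m := vscale c u]) = c * \<alpha> (xs[m := u])))"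

definition omega_pow :: "('p::prime_card) mod_ring \<Rightarrow> complex" where
  "omega_pow a = exp (2 * of_real pi * \<i> * of_int (to_int_mod_ring a) / of_nat CARD('p))"

definition avg :: "'a set \<Rightarrow> ('a \<Rightarrow> complex) \<Rightarrow> complex" where
  "avg A g = (\<Sum>a\<in>A. g a) / of_nat (card A)"

definition bias :: "('p::prime_card) vec set list \<Rightarrow> ('p vec list \<Rightarrow> 'p mod_ring) \<Rightarrow> complex" where
  "bias Vs \<alpha> = avg (listset Vs) (\<lambda>xs. omega_pow (\<alpha> xs))"

definition mderiv :: "('p::prime_card) vec \<Rightarrow> ('p vec \<Rightarrow> complex) \<Rightarrow> 'p vec \<Rightarrow> complex" where
  "mderiv u f x = f (vadd x u) * cnj (f x)"

fun mderivs :: "('p::prime_card) vec list \<Rightarrow> ('p vec \<Rightarrow> complex) \<Rightarrow> 'p vec \<Rightarrow> complex" where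
  "mderivs [] f = f"
| "mderivs (u # us) f = mderiv u (mderivs us f)"

text \<open>psi'_{ij}: swap the argument in position i (among the first r-1) with the
  d_j argument (position r-1+j), and subtract.\<close>
definition psi_prime :: "nat \<Rightarrow> nat \<Rightarrow> nat \<Rightarrow> (('p::prime_card) vec list \<Rightarrow> 'p mod_ring) \<Rightarrow> 'p vec list \<Rightarrow> 'p mod_ring" where
  "psi_prime r i j \<psi> ys =
     \<psi> ys - \<psi> (ys[i := ys ! (r - 1 + j), r - 1 + j := ys ! i])"

end

theory Submission
  imports Defs "HOL-Library.Function_Algebras"
begin

lemma vadd_plus: "vadd x y = x + y" by (auto simp: vadd_def plus_fun_def)

lemma omega_add: "omega_pow (a + b :: ('p::prime_card) mod_ring) = omega_pow a * omega_pow b"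
proof -
  let ?p = "int CARD('p)"
  have "to_int_mod_ring (a+b) = (to_int_mod_ring a + to_int_mod_ring b) mod ?p"
    by (rule to_int_mod_ring_add)
  then obtain m where m: "to_int_mod_ring (a+b) = to_int_mod_ring a + to_int_mod_ring b + ?p * m"
    by (metis mod_eqE mod_mod_trivial mult.commute)
  have p0: "of_nat CARD('p) \<noteq> (0::complex)" by simp
  have "2 * of_real pi * \<i> * of_int (to_int_mod_ring a + to_int_mod_ring b + ?p * m) / of_nat CARD('p)
     = 2 * of_real pi * \<i> * of_int (to_int_mod_ring a) / of_nat CARD('p)
       + 2 * of_real pi * \<i> * of_int (to_int_mod_ring b) / of_nat CARD('p)
       + \<i> * (of_int m * (of_real pi * 2))"
    using p0 by (simp add: field_simps)
  then show ?thesis unfolding omega_pow_def m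
    by (simp add: exp_add)
qed

lemma omega_zero[simp]: "omega_pow (0 :: ('p::prime_card) mod_ring) = 1"
  by (simp add: omega_pow_def)

lemma omega_cmod[simp]: "cmod (omega_pow (a :: ('p::prime_card) mod_ring)) = 1"
  unfolding omega_pow_def by (simp add: norm_exp_eq_Re)

lemma omega_cnj: "cnj (omega_pow (a :: ('p::prime_card) mod_ring)) = omega_pow (-a)"
proof -
  have "omega_pow a * omega_pow (-a) = 1" by (metis omega_add omega_zero add.right_inverse)
  moreover have "omega_pow a * cnj (omega_pow a) = 1"
    using omega_cmod[of a] by (metis complex_norm_square mult.commute of_real_1 power_one)
  ultimately show ?thesis
    by (metis mult.left_commute mult.right_neutral mult.commute)
qed

lemma omega_diff: "omega_pow (a - b :: ('p::prime_card) mod_ring) = omega_pow a * cnj (omega_pow b)"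
  by (simp add: omega_cnj omega_add[symmetric])

lemma omega_ne1: assumes "(c :: ('p::prime_card) mod_ring) \<noteq> 0" shows "omega_pow c \<noteq> 1"
proof
  assume h: "omega_pow c = 1"
  let ?k = "to_int_mod_ring c"
  have k0: "?k \<noteq> 0" using assms by (metis to_int_mod_ring_hom.eq_iff to_int_mod_ring_hom.hom_zero)
  have kr: "?k \<in> {0..<int CARD('p)}" using range_to_int_mod_ring by blast
  have "Re (2 * of_real pi * \<i> * of_int ?k / of_nat CARD('p)) = 0 \<and>
     (\<exists>n::int. Im (2 * of_real pi * \<i> * of_int ?k / of_nat CARD('p)) = of_int (2 * n) * pi)"
    using h unfolding omega_pow_def exp_eq_1 by blast
  then obtain n :: int where "2 * pi * ?k / CARD('p) = 2 * n * pi" by auto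
  then have "real_of_int ?k = real_of_int n * real CARD('p)" using pi_gt_zero by (simp add: field_simps)
  then have "?k = n * CARD('p)" by (metis of_int_eq_iff of_int_mult of_int_of_nat_eq)
  moreover have "0 \<le> ?k" using kr by simp
  then have "0 < ?k" using k0 by linarith
  ultimately have "0 < n" by (simp add: zero_less_mult_iff)
  then have "int CARD('p) \<le> ?k" using \<open>?k = n * CARD('p)\<close> by simp
  then show False using kr by simp
qed

definition ravg :: "'a set \<Rightarrow> ('a \<Rightarrow> real) \<Rightarrow> real" where
  "ravg A h = (\<Sum>a\<in>A. h a) / real (card A)"

lemma avg_swap: "avg A (\<lambda>a. avg B (\<lambda>b. F a b)) = avg B (\<lambda>b. avg A (\<lambda>a. F a b))"
  unfolding avg_def by (simp add: sum_divide_distrib[symmetric] sum.swap[of _ A B] divide_divide_eq_left mult.commute)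

lemma ravg_swap: "ravg A (\<lambda>a. ravg B (\<lambda>b. F a b)) = ravg B (\<lambda>b. ravg A (\<lambda>a. F a b))"
  unfolding ravg_def by (simp add: sum_divide_distrib[symmetric] sum.swap[of _ A B] divide_divide_eq_left mult.commute)

lemma avg_prod: "finite A \<Longrightarrow> finite B \<Longrightarrow>
  avg (A \<times> B) (\<lambda>(a,b). F a b) = avg A (\<lambda>a. avg B (\<lambda>b. F a b))"
  unfolding avg_def by (simp add: sum.cartesian_product[symmetric] card_cartesian_product
     sum_divide_distrib[symmetric] divide_divide_eq_left mult.commute)

lemma avg_const: "finite A \<Longrightarrow> A \<noteq> {} \<Longrightarrow> avg A (\<lambda>_. c) = c"
  unfolding avg_def by simp

lemma ravg_const: "finite A \<Longrightarrow> A \<noteq> {} \<Longrightarrow> ravg A (\<lambda>_. c) = c"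
  unfolding ravg_def by simp

lemma avg_cmult: "avg A (\<lambda>a. c * F a) = c * avg A F"
  unfolding avg_def by (simp add: sum_distrib_left)

lemma avg_multc: "avg A (\<lambda>a. F a * c) = avg A F * c"
  unfolding avg_def by (simp add: sum_distrib_right)

lemma avg_mult_avg: "avg A F * avg B H = avg A (\<lambda>a. avg B (\<lambda>b. F a * H b))"
  by (simp add: avg_cmult avg_multc)

lemma avg_cnj: "cnj (avg A F) = avg A (\<lambda>a. cnj (F a))"
  unfolding avg_def by simp

lemma avg_of_real: "avg A (\<lambda>a. of_real (h a)) = of_real (ravg A h)"
  unfolding avg_def ravg_def by simp

lemma Re_avg: "Re (avg A F) = ravg A (\<lambda>a. Re (F a))"
  unfolding avg_def ravg_def by (simp add: Re_divide_of_nat)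

lemma Im_avg: "Im (avg A F) = ravg A (\<lambda>a. Im (F a))"
  unfolding avg_def ravg_def by (simp add: Im_divide_of_nat)

lemma avg_cong: "(\<And>a. a \<in> A \<Longrightarrow> F a = H a) \<Longrightarrow> avg A F = avg A H"
  unfolding avg_def by simp

lemma ravg_cong: "(\<And>a. a \<in> A \<Longrightarrow> F a = H a) \<Longrightarrow> ravg A F = ravg A H"
  unfolding ravg_def by simp

lemma ravg_mono: "(\<And>a. a \<in> A \<Longrightarrow> F a \<le> H a) \<Longrightarrow> ravg A F \<le> ravg A H"
  unfolding ravg_def by (simp add: sum_mono divide_right_mono)

lemma ravg_nonneg: "(\<And>a. a \<in> A \<Longrightarrow> 0 \<le> F a) \<Longrightarrow> 0 \<le> ravg A F"
  unfolding ravg_def by (simp add: sum_nonneg)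

lemma cmod_avg: "cmod (avg A F) \<le> ravg A (\<lambda>a. cmod (F a))"
  unfolding avg_def ravg_def by (simp add: norm_divide divide_right_mono norm_sum)

lemma ravg_CS: "(ravg A F)\<^sup>2 \<le> ravg A (\<lambda>a. (F a)\<^sup>2)"
proof (cases "finite A \<and> A \<noteq> {}")
  case True
  have "(\<Sum>a\<in>A. F a * 1)\<^sup>2 \<le> (\<Sum>a\<in>A. (F a)\<^sup>2) * (\<Sum>a\<in>A. 1\<^sup>2)"
    by (rule Cauchy_Schwarz_ineq_sum)
  then have "(sum F A)\<^sup>2 \<le> (\<Sum>a\<in>A. (F a)\<^sup>2) * real (card A)" by simp
  moreover have "real (card A) > 0" using True by auto
  ultimately show ?thesis unfolding ravg_def
    by (simp add: power_divide field_simps power2_eq_square)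
next
  case False
  then show ?thesis unfolding ravg_def by auto
qed

lemma cmod_avg_sq: "(cmod (avg A F))\<^sup>2 \<le> ravg A (\<lambda>a. (cmod (F a))\<^sup>2)"
proof -
  have "cmod (avg A F) \<le> ravg A (\<lambda>a. cmod (F a))" by (rule cmod_avg)
  then have "(cmod (avg A F))\<^sup>2 \<le> (ravg A (\<lambda>a. cmod (F a)))\<^sup>2"
    by (simp add: power_mono)
  also have "\<dots> \<le> ravg A (\<lambda>a. (cmod (F a))\<^sup>2)" by (rule ravg_CS)
  finally show ?thesis .
qed

lemma avg_translate:
  fixes G :: "'a::ab_group_add set"
  assumes "c \<in> G" "\<And>x. x \<in> G \<Longrightarrow> x + c \<in> G" "\<And>x. x \<in> G \<Longrightarrow> x - c \<in> G"
  shows "avg G (\<lambda>x. F (x + c)) = avg G F"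
proof -
  have "(\<Sum>x\<in>G. F (x + c)) = (\<Sum>y\<in>G. F y)"
    by (rule sum.reindex_bij_witness[where i="\<lambda>y. y - c" and j="\<lambda>x. x + c"]) (auto simp: assms)
  then show ?thesis unfolding avg_def by simp
qed

lemma avg_neg:
  fixes G :: "'a::ab_group_add set"
  assumes "\<And>x. x \<in> G \<Longrightarrow> - x \<in> G"
  shows "avg G (\<lambda>x. F (- x)) = avg G F"
proof -
  have "(\<Sum>x\<in>G. F (- x)) = (\<Sum>y\<in>G. F y)"
    by (rule sum.reindex_bij_witness[where i="\<lambda>y. - y" and j="\<lambda>x. - x"]) (auto simp: assms)
  then show ?thesis unfolding avg_def by simp
qed

lemma cmod_avg_le1: "(\<And>a. a \<in> A \<Longrightarrow> cmod (F a) \<le> 1) \<Longrightarrow> cmod (avg A F) \<le> 1"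
proof -
  assume h: "\<And>a. a \<in> A \<Longrightarrow> cmod (F a) \<le> 1"
  have "cmod (avg A F) \<le> ravg A (\<lambda>a. cmod (F a))" by (rule cmod_avg)
  also have "\<dots> \<le> ravg A (\<lambda>a. 1)" by (rule ravg_mono) (use h in auto)
  also have "\<dots> \<le> 1" unfolding ravg_def by (cases "finite A") auto
  finally show ?thesis .
qed

definition md :: "'a::ab_group_add \<Rightarrow> ('a \<Rightarrow> complex) \<Rightarrow> 'a \<Rightarrow> complex" where
  "md u h x = h (x + u) * cnj (h x)"

locale core =
  fixes G D :: "'a::ab_group_add set" and \<beta> :: "'a \<Rightarrow> 'a \<Rightarrow> ('p::prime_card) mod_ring"
  assumes finG: "finite G" and zG: "0 \<in> G" and addG: "\<And>x y. x \<in> G \<Longrightarrow> y \<in> G \<Longrightarrow> x + y \<in> G"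
    and negG: "\<And>x. x \<in> G \<Longrightarrow> - x \<in> G"
    and finD: "finite D" and zD: "0 \<in> D" and addD: "\<And>x y. x \<in> D \<Longrightarrow> y \<in> D \<Longrightarrow> x + y \<in> D"
    and negD: "\<And>x. x \<in> D \<Longrightarrow> - x \<in> D"
    and DG: "D \<subseteq> G"
    and lin1: "\<And>x y d. x \<in> G \<Longrightarrow> y \<in> G \<Longrightarrow> d \<in> D \<Longrightarrow> \<beta> (x + y) d = \<beta> x d + \<beta> y d"
    and lin2: "\<And>x d e. x \<in> G \<Longrightarrow> d \<in> D \<Longrightarrow> e \<in> D \<Longrightarrow> \<beta> x (d + e) = \<beta> x d + \<beta> x e"
begin

lemma diffG: "x \<in> G \<Longrightarrow> y \<in> G \<Longrightarrow> x - y \<in> G"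
  using addG negG by (metis diff_conv_add_uminus)
lemma diffD: "x \<in> D \<Longrightarrow> y \<in> D \<Longrightarrow> x - y \<in> D"
  using addD negD by (metis diff_conv_add_uminus)
lemma GneD: "G \<noteq> {}" using zG by auto
lemma DneD: "D \<noteq> {}" using zD by auto
lemma inDG: "x \<in> D \<Longrightarrow> x \<in> G" using DG by auto

lemma transG: "c \<in> G \<Longrightarrow> avg G (\<lambda>x. F (x + c)) = avg G F"
  by (rule avg_translate) (auto intro: addG diffG)
lemma transD: "c \<in> D \<Longrightarrow> avg D (\<lambda>x. F (x + c)) = avg D F"
  by (rule avg_translate) (auto intro: addD diffD)

lemma neg1: "x \<in> G \<Longrightarrow> d \<in> D \<Longrightarrow> \<beta> (- x) d = - \<beta> x d"
  using lin1[of x "-x" d] negG[of x] lin1[of 0 0 d] zG by (simp add: eq_neg_iff_add_eq_0)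
lemma neg2: "x \<in> G \<Longrightarrow> d \<in> D \<Longrightarrow> \<beta> x (- d) = - \<beta> x d"
  using lin2[of x d "-d"] negD[of d] lin2[of x 0 0] zD by (simp add: eq_neg_iff_add_eq_0)
lemma diff1: "x \<in> G \<Longrightarrow> y \<in> G \<Longrightarrow> d \<in> D \<Longrightarrow> \<beta> (x - y) d = \<beta> x d - \<beta> y d"
  using lin1[of x "-y" d] neg1[of y d] negG[of y] by simp
lemma diff2: "x \<in> G \<Longrightarrow> d \<in> D \<Longrightarrow> e \<in> D \<Longrightarrow> \<beta> x (d - e) = \<beta> x d - \<beta> x e"
  using lin2[of x d "-e"] neg2[of x e] negD[of e] by simp

definition \<sigma> where "\<sigma> t w = \<beta> t w - \<beta> w t"

lemma sig_add1: "t \<in> D \<Longrightarrow> t' \<in> D \<Longrightarrow> w \<in> D \<Longrightarrow> \<sigma> (t + t') w = \<sigma> t w + \<sigma> t' w"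
  unfolding \<sigma>_def using lin1 lin2 inDG by simp
lemma sig_diff2: "t \<in> D \<Longrightarrow> w \<in> D \<Longrightarrow> w' \<in> D \<Longrightarrow> \<sigma> t w - \<sigma> t w' = \<sigma> t (w - w')"
  unfolding \<sigma>_def using diff1 diff2 inDG by simp

definition Ir where "Ir w = (if \<forall>t\<in>D. \<sigma> t w = 0 then 1 else (0::real))"

lemma char: assumes w: "w \<in> D" shows "avg D (\<lambda>t. omega_pow (\<sigma> t w)) = of_real (Ir w)"
proof (cases "\<forall>t\<in>D. \<sigma> t w = 0")
  case True
  then have "avg D (\<lambda>t. omega_pow (\<sigma> t w)) = avg D (\<lambda>t. 1)" by (intro avg_cong) simp
  then show ?thesis using True avg_const[OF finD DneD] by (simp add: Ir_def)
next
  case False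
  then obtain t0 where t0: "t0 \<in> D" "\<sigma> t0 w \<noteq> 0" by auto
  let ?S = "avg D (\<lambda>t. omega_pow (\<sigma> t w))"
  have "?S = avg D (\<lambda>t. omega_pow (\<sigma> (t + t0) w))" using transD[OF t0(1), of "\<lambda>t. omega_pow (\<sigma> t w)"] by simp
  also have "\<dots> = avg D (\<lambda>t. omega_pow (\<sigma> t0 w) * omega_pow (\<sigma> t w))"
    by (intro avg_cong) (simp add: sig_add1 t0 w omega_add mult.commute)
  also have "\<dots> = omega_pow (\<sigma> t0 w) * ?S" by (rule avg_cmult)
  finally have "(1 - omega_pow (\<sigma> t0 w)) * ?S = 0" by (simp add: algebra_simps)
  then have "?S = 0" using omega_ne1[OF t0(2)] by simp
  then show ?thesis using False by (simp add: Ir_def)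
qed

definition P0 where "P0 = ravg D Ir"

lemma Ir_range: "0 \<le> Ir w" "Ir w \<le> 1" by (auto simp: Ir_def)

lemma P0_sq: "(sqrt P0)\<^sup>2 = P0" "0 \<le> P0"
proof -
  show "0 \<le> P0" unfolding P0_def by (rule ravg_nonneg) (simp add: Ir_range)
  then show "(sqrt P0)\<^sup>2 = P0" by simp
qed

lemma P_eq: "avg D (\<lambda>d. avg D (\<lambda>u. omega_pow (\<beta> u d - \<beta> d u))) = of_real P0"
proof -
  have "avg D (\<lambda>d. avg D (\<lambda>u. omega_pow (\<beta> u d - \<beta> d u))) = avg D (\<lambda>d. of_real (Ir d))"
    by (intro avg_cong) (simp add: char[symmetric] \<sigma>_def)
  then show ?thesis by (simp add: avg_of_real P0_def)
qed

end

lemma ravg_translate: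
  fixes G :: "'a::ab_group_add set"
  assumes "c \<in> G" "\<And>x. x \<in> G \<Longrightarrow> x + c \<in> G" "\<And>x. x \<in> G \<Longrightarrow> x - c \<in> G"
  shows "ravg G (\<lambda>x. F (x + c)) = ravg G F"
proof -
  have "(\<Sum>x\<in>G. F (x + c)) = (\<Sum>y\<in>G. F y)"
    by (rule sum.reindex_bij_witness[where i="\<lambda>y. y - c" and j="\<lambda>x. x + c"]) (auto simp: assms)
  then show ?thesis unfolding ravg_def by simp
qed

lemma ravg_neg:
  fixes G :: "'a::ab_group_add set"
  assumes "\<And>x. x \<in> G \<Longrightarrow> - x \<in> G"
  shows "ravg G (\<lambda>x. F (- x)) = ravg G F"
proof -
  have "(\<Sum>x\<in>G. F (- x)) = (\<Sum>y\<in>G. F y)"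
    by (rule sum.reindex_bij_witness[where i="\<lambda>y. - y" and j="\<lambda>x. - x"]) (auto simp: assms)
  then show ?thesis unfolding ravg_def by simp
qed

context core
begin

lemma rtransD: "c \<in> D \<Longrightarrow> ravg D (\<lambda>x. F (x + c)) = ravg D F"
  by (rule ravg_translate) (auto intro: addD diffD)

lemma Ir_conv: "s \<in> D \<Longrightarrow> ravg D (\<lambda>s'. Ir (s - s')) = P0"
proof -
  assume s: "s \<in> D"
  have "ravg D (\<lambda>s'. Ir (s - s')) = ravg D (\<lambda>s'. Ir (s + - s'))" by simp
  also have "\<dots> = ravg D (\<lambda>s'. Ir (s + s'))"
    using ravg_neg[of D "\<lambda>x. Ir (s + x)"] negD by simp
  also have "\<dots> = ravg D (\<lambda>s'. Ir (s' + s))" by (simp add: add.commute)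
  also have "\<dots> = P0" unfolding P0_def by (rule rtransD[OF s])
  finally show ?thesis .
qed

lemma e6:
  assumes ab: "\<And>t. t \<in> D \<Longrightarrow> cmod (a t) \<le> 1"
  shows "cmod (avg D (\<lambda>t. avg D (\<lambda>s. a t * cnj (a s) * omega_pow (\<sigma> t s)))) \<le> sqrt P0"
proof -
  define B where "B t = avg D (\<lambda>s. cnj (a s) * omega_pow (\<sigma> t s))" for t
  have J: "avg D (\<lambda>t. avg D (\<lambda>s. a t * cnj (a s) * omega_pow (\<sigma> t s))) = avg D (\<lambda>t. a t * B t)"
    unfolding B_def by (simp add: avg_cmult[symmetric] mult.assoc)
  have "(cmod (avg D (\<lambda>t. a t * B t)))\<^sup>2 \<le> ravg D (\<lambda>t. (cmod (a t * B t))\<^sup>2)"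
    by (rule cmod_avg_sq)
  also have "\<dots> \<le> ravg D (\<lambda>t. (cmod (B t))\<^sup>2)"
  proof (rule ravg_mono)
    fix t assume "t \<in> D"
    then have "cmod (a t) \<le> 1" by (rule ab)
    then have "cmod (a t) * cmod (B t) \<le> cmod (B t)"
      by (simp add: mult_left_le_one_le)
    then show "(cmod (a t * B t))\<^sup>2 \<le> (cmod (B t))\<^sup>2"
      by (simp add: norm_mult power_mono)
  qed
  also have "\<dots> \<le> P0"
  proof -
    have "of_real (ravg D (\<lambda>t. (cmod (B t))\<^sup>2)) = avg D (\<lambda>t. B t * cnj (B t))"
      by (simp only: avg_of_real[symmetric] complex_norm_square)
    also have "\<dots> = avg D (\<lambda>t. avg D (\<lambda>s. avg D (\<lambda>s'. (cnj (a s) * omega_pow (\<sigma> t s)) * cnj (cnj (a s') * omega_pow (\<sigma> t s')))))"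
      unfolding B_def avg_cnj avg_mult_avg ..
    also have "\<dots> = avg D (\<lambda>t. avg D (\<lambda>s. avg D (\<lambda>s'. cnj (a s) * a s' * (omega_pow (\<sigma> t s) * cnj (omega_pow (\<sigma> t s'))))))"
      by (intro avg_cong) (simp add: mult_ac)
    also have "\<dots> = avg D (\<lambda>s. avg D (\<lambda>s'. avg D (\<lambda>t. cnj (a s) * a s' * (omega_pow (\<sigma> t s) * cnj (omega_pow (\<sigma> t s'))))))"
      by (subst avg_swap, rule avg_cong, rule avg_swap)
    also have "\<dots> = avg D (\<lambda>s. avg D (\<lambda>s'. cnj (a s) * a s' * of_real (Ir (s - s'))))"
    proof (intro avg_cong)
      fix s s' assume s: "s \<in> D" and s': "s' \<in> D"
      have "avg D (\<lambda>t. cnj (a s) * a s' * (omega_pow (\<sigma> t s) * cnj (omega_pow (\<sigma> t s'))))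
          = cnj (a s) * a s' * avg D (\<lambda>t. omega_pow (\<sigma> t (s - s')))"
        by (simp add: avg_cmult[symmetric] omega_diff[symmetric]) (intro avg_cong, simp add: sig_diff2 s s')
      also have "\<dots> = cnj (a s) * a s' * of_real (Ir (s - s'))" using char diffD s s' by simp
      finally show "avg D (\<lambda>t. cnj (a s) * a s' * (omega_pow (\<sigma> t s) * cnj (omega_pow (\<sigma> t s'))))
          = cnj (a s) * a s' * of_real (Ir (s - s'))" .
    qed
    finally have eq: "ravg D (\<lambda>t. (cmod (B t))\<^sup>2) = Re (avg D (\<lambda>s. avg D (\<lambda>s'. cnj (a s) * a s' * of_real (Ir (s - s')))))"
      by (metis Re_complex_of_real)
    also have "\<dots> \<le> cmod (avg D (\<lambda>s. avg D (\<lambda>s'. cnj (a s) * a s' * of_real (Ir (s - s')))))"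
      by (rule complex_Re_le_cmod)
    also have "\<dots> \<le> ravg D (\<lambda>s. cmod (avg D (\<lambda>s'. cnj (a s) * a s' * of_real (Ir (s - s')))))"
      by (rule cmod_avg)
    also have "\<dots> \<le> ravg D (\<lambda>s. ravg D (\<lambda>s'. Ir (s - s')))"
    proof (rule ravg_mono)
      fix s assume s: "s \<in> D"
      have "cmod (avg D (\<lambda>s'. cnj (a s) * a s' * of_real (Ir (s - s')))) \<le>
            ravg D (\<lambda>s'. cmod (cnj (a s) * a s' * of_real (Ir (s - s'))))" by (rule cmod_avg)
      also have "\<dots> \<le> ravg D (\<lambda>s'. Ir (s - s'))"
      proof (rule ravg_mono)
        fix s' assume s': "s' \<in> D"
        have "cmod (a s) * cmod (a s') \<le> 1" using ab[OF s] ab[OF s'] by (simp add: mult_le_one)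
        then have "cmod (a s) * cmod (a s') * Ir (s - s') \<le> Ir (s - s')"
          using Ir_range by (simp add: mult_left_le_one_le)
        then show "cmod (cnj (a s) * a s' * of_real (Ir (s - s'))) \<le> Ir (s - s')"
          using Ir_range by (simp add: norm_mult)
      qed
      finally show "cmod (avg D (\<lambda>s'. cnj (a s) * a s' * of_real (Ir (s - s')))) \<le> ravg D (\<lambda>s'. Ir (s - s'))" .
    qed
    also have "\<dots> = ravg D (\<lambda>s. P0)" by (rule ravg_cong) (simp add: Ir_conv)
    also have "\<dots> = P0" by (rule ravg_const[OF finD DneD])
    finally show ?thesis .
  qed
  finally show ?thesis unfolding J by (rule real_le_rsqrt)
qed

end

context core
begin
lemma bexp: "x \<in> G \<Longrightarrow> m \<in> D \<Longrightarrow> s \<in> D \<Longrightarrow> t \<in> D \<Longrightarrow>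
   \<beta> x (m + - (s + t)) = \<beta> x m - \<beta> x s - \<beta> x t"
  using lin2[of x m "-(s+t)"] neg2[of x "s+t"] lin2[of x s t] addD[of s t] negD[of "s+t"] by simp

lemma pointwise:
  assumes s: "s \<in> D" and t: "t \<in> D" and m: "m \<in> D"
  shows "g (s + (m + - (s + t))) * cnj (g s) * cnj (g (t + (m + - (s + t)))) * g t *
          (omega_pow (\<beta> s (m + - (s + t))) * cnj (omega_pow (\<beta> t (m + - (s + t)))))
       = (g (m - t) * g t * omega_pow (\<beta> t t - \<beta> t m)) * cnj (g (m - s) * g s * omega_pow (\<beta> s s - \<beta> s m))
          * omega_pow (\<sigma> t s)"
proof -
  have d1: "s + (m + - (s + t)) = m - t" and d2: "t + (m + - (s + t)) = m - s" by (simp_all add: algebra_simps)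
  have e: "\<beta> s (m + - (s + t)) - \<beta> t (m + - (s + t)) = (\<beta> t t - \<beta> t m) - (\<beta> s s - \<beta> s m) + \<sigma> t s"
  proof -
    have "\<beta> s (m + - (s + t)) - \<beta> t (m + - (s + t)) = (\<beta> s m - \<beta> s s - \<beta> s t) - (\<beta> t m - \<beta> t s - \<beta> t t)"
      using bexp[OF inDG[OF s] m s t] bexp[OF inDG[OF t] m s t] by simp
    also have "\<dots> = (\<beta> t t - \<beta> t m) - (\<beta> s s - \<beta> s m) + (\<beta> t s - \<beta> s t)"
      by (simp add: algebra_simps)
    finally show ?thesis by (simp add: \<sigma>_def)
  qed
  have ph: "omega_pow (\<beta> s (m + - (s + t))) * cnj (omega_pow (\<beta> t (m + - (s + t))))
     = omega_pow (\<beta> t t - \<beta> t m) * cnj (omega_pow (\<beta> s s - \<beta> s m)) * omega_pow (\<sigma> t s)"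
  proof -
    have "omega_pow (\<beta> s (m + - (s + t))) * cnj (omega_pow (\<beta> t (m + - (s + t))))
      = omega_pow (\<beta> s (m + - (s + t)) - \<beta> t (m + - (s + t)))" by (simp only: omega_diff)
    also have "\<dots> = omega_pow ((\<beta> t t - \<beta> t m) - (\<beta> s s - \<beta> s m) + \<sigma> t s)" by (simp only: e)
    also have "\<dots> = omega_pow (\<beta> t t - \<beta> t m) * cnj (omega_pow (\<beta> s s - \<beta> s m)) * omega_pow (\<sigma> t s)"
      by (simp only: omega_add omega_diff)
    finally show ?thesis .
  qed
  show ?thesis unfolding d1 d2 ph complex_cnj_mult by (simp only: ac_simps)
qed
lemma step3:
  assumes gb: "\<And>s. s \<in> D \<Longrightarrow> cmod (g s) \<le> 1"
  shows "ravg D (\<lambda>d. (cmod (avg D (\<lambda>s. md d g s * omega_pow (\<beta> s d))))\<^sup>2) \<le> sqrt P0"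
proof -
  define A where "A m t = g (m - t) * g t * omega_pow (\<beta> t t - \<beta> t m)" for m t
  define Y where "Y s t d = g (s + d) * cnj (g s) * cnj (g (t + d)) * g t *
          (omega_pow (\<beta> s d) * cnj (omega_pow (\<beta> t d)))" for s t d
  define Z where "Z m t s = A m t * cnj (A m s) * omega_pow (\<sigma> t s)" for m t s
  have "of_real (ravg D (\<lambda>d. (cmod (avg D (\<lambda>s. md d g s * omega_pow (\<beta> s d))))\<^sup>2))
     = avg D (\<lambda>d. avg D (\<lambda>s. md d g s * omega_pow (\<beta> s d)) * cnj (avg D (\<lambda>s. md d g s * omega_pow (\<beta> s d))))"
    by (simp only: avg_of_real[symmetric] complex_norm_square)
  also have "\<dots> = avg D (\<lambda>d. avg D (\<lambda>s. avg D (\<lambda>t. (md d g s * omega_pow (\<beta> s d)) * cnj (md d g t * omega_pow (\<beta> t d)))))"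
    unfolding avg_cnj avg_mult_avg ..
  also have "\<dots> = avg D (\<lambda>d. avg D (\<lambda>s. avg D (\<lambda>t. Y s t d)))"
    by (rule avg_cong)+ (simp only: Y_def md_def complex_cnj_mult complex_cnj_cnj ac_simps)
  also have "\<dots> = avg D (\<lambda>s. avg D (\<lambda>t. avg D (\<lambda>d. Y s t d)))"
    by (subst avg_swap, rule avg_cong, rule avg_swap)
  also have "\<dots> = avg D (\<lambda>s. avg D (\<lambda>t. avg D (\<lambda>m. Z m t s)))"
  proof (rule avg_cong, rule avg_cong)
    fix s t assume s: "s \<in> D" and t: "t \<in> D"
    have c: "- (s + t) \<in> D" using negD[OF addD[OF s t]] .
    have "avg D (\<lambda>d. Y s t d) = avg D (\<lambda>m. Y s t (m + - (s + t)))"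
      using transD[OF c, of "Y s t"] by simp
    also have "\<dots> = avg D (\<lambda>m. Z m t s)"
      by (rule avg_cong) (unfold Y_def Z_def A_def, rule pointwise[OF s t], assumption)
    finally show "avg D (\<lambda>d. Y s t d) = avg D (\<lambda>m. Z m t s)" .
  qed
  also have "\<dots> = avg D (\<lambda>s. avg D (\<lambda>m. avg D (\<lambda>t. Z m t s)))"
    by (rule avg_cong, rule avg_swap)
  also have "\<dots> = avg D (\<lambda>m. avg D (\<lambda>s. avg D (\<lambda>t. Z m t s)))"
    by (rule avg_swap)
  also have "\<dots> = avg D (\<lambda>m. avg D (\<lambda>t. avg D (\<lambda>s. Z m t s)))"
    by (rule avg_cong, rule avg_swap)
  finally have eq0: "complex_of_real (ravg D (\<lambda>d. (cmod (avg D (\<lambda>s. md d g s * omega_pow (\<beta> s d))))\<^sup>2))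
      = avg D (\<lambda>m. avg D (\<lambda>t. avg D (\<lambda>s. Z m t s)))" .
  have "ravg D (\<lambda>d. (cmod (avg D (\<lambda>s. md d g s * omega_pow (\<beta> s d))))\<^sup>2)
      = Re (avg D (\<lambda>m. avg D (\<lambda>t. avg D (\<lambda>s. Z m t s))))"
    using arg_cong[where f=Re, OF eq0] by (simp only: Re_complex_of_real)
  also have "\<dots> \<le> cmod (avg D (\<lambda>m. avg D (\<lambda>t. avg D (\<lambda>s. Z m t s))))"
    by (rule complex_Re_le_cmod)
  also have "\<dots> \<le> ravg D (\<lambda>m. cmod (avg D (\<lambda>t. avg D (\<lambda>s. Z m t s))))"
    by (rule cmod_avg)
  also have "\<dots> \<le> ravg D (\<lambda>m. sqrt P0)"
  proof (rule ravg_mono)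
    fix m assume m: "m \<in> D"
    have "\<And>t. t \<in> D \<Longrightarrow> cmod (A m t) \<le> 1"
    proof -
      fix t assume t: "t \<in> D"
      have "cmod (g (m - t)) \<le> 1" using gb diffD m t by simp
      moreover have "cmod (g t) \<le> 1" using gb t by simp
      ultimately show "cmod (A m t) \<le> 1" unfolding A_def by (simp add: norm_mult mult_le_one)
    qed
    then show "cmod (avg D (\<lambda>t. avg D (\<lambda>s. Z m t s))) \<le> sqrt P0"
      unfolding Z_def by (rule e6)
  qed
  also have "\<dots> = sqrt P0" by (rule ravg_const[OF finD DneD])
  finally show ?thesis .
qed

end

context core
begin

lemma pw1:
  assumes a: "a \<in> G" and x: "x \<in> G" and d: "d \<in> D"
  shows "(md d g (a + x) * omega_pow (\<beta> (a + x) d)) * cnj (md d g x * omega_pow (\<beta> x d))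
       = md a (md d g) x * omega_pow (\<beta> a d)"
proof -
  have "omega_pow (\<beta> (a + x) d) * cnj (omega_pow (\<beta> x d)) = omega_pow (\<beta> (a + x) d - \<beta> x d)"
    by (simp only: omega_diff)
  also have "\<beta> (a + x) d - \<beta> x d = \<beta> a d" using lin1[OF a x d] by simp
  finally have ph: "omega_pow (\<beta> (a + x) d) * cnj (omega_pow (\<beta> x d)) = omega_pow (\<beta> a d)" .
  have "(md d g (a + x) * omega_pow (\<beta> (a + x) d)) * cnj (md d g x * omega_pow (\<beta> x d))
      = md d g (a + x) * cnj (md d g x) * (omega_pow (\<beta> (a + x) d) * cnj (omega_pow (\<beta> x d)))"
    by (simp only: complex_cnj_mult ac_simps)
  also have "\<dots> = md a (md d g) x * omega_pow (\<beta> a d)"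
    unfolding ph by (simp only: md_def[of a] add.commute[of x a])
  finally show ?thesis .
qed

lemma step1:
  assumes d: "d \<in> D"
  shows "avg G (\<lambda>a. avg G (\<lambda>x. md a (md d g) x * omega_pow (\<beta> a d)))
     = avg G (\<lambda>x. md d g x * omega_pow (\<beta> x d)) * cnj (avg G (\<lambda>x. md d g x * omega_pow (\<beta> x d)))"
proof -
  define \<Phi> where "\<Phi> x = md d g x * omega_pow (\<beta> x d)" for x
  have "avg G \<Phi> * cnj (avg G \<Phi>) = avg G (\<lambda>y. avg G (\<lambda>x. \<Phi> y * cnj (\<Phi> x)))"
    unfolding avg_cnj avg_mult_avg ..
  also have "\<dots> = avg G (\<lambda>x. avg G (\<lambda>y. \<Phi> y * cnj (\<Phi> x)))" by (rule avg_swap)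
  also have "\<dots> = avg G (\<lambda>x. avg G (\<lambda>a. \<Phi> (a + x) * cnj (\<Phi> x)))"
  proof (rule avg_cong)
    fix x assume x: "x \<in> G"
    show "avg G (\<lambda>y. \<Phi> y * cnj (\<Phi> x)) = avg G (\<lambda>a. \<Phi> (a + x) * cnj (\<Phi> x))"
      using transG[OF x, of "\<lambda>y. \<Phi> y * cnj (\<Phi> x)"] by simp
  qed
  also have "\<dots> = avg G (\<lambda>x. avg G (\<lambda>a. md a (md d g) x * omega_pow (\<beta> a d)))"
    by (rule avg_cong)+ (unfold \<Phi>_def, rule pw1[OF _ _ d], assumption+)
  also have "\<dots> = avg G (\<lambda>a. avg G (\<lambda>x. md a (md d g) x * omega_pow (\<beta> a d)))" by (rule avg_swap)
  finally show ?thesis unfolding \<Phi>_def by simp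
qed

lemma step2:
  assumes d: "d \<in> D"
  shows "(cmod (avg G (\<lambda>x. md d g x * omega_pow (\<beta> x d))))\<^sup>2
     \<le> ravg G (\<lambda>h. (cmod (avg D (\<lambda>s. md d (\<lambda>y. g (h + y)) s * omega_pow (\<beta> s d))))\<^sup>2)"
proof -
  define \<Phi> where "\<Phi> x = md d g x * omega_pow (\<beta> x d)" for x
  have "avg G \<Phi> = avg D (\<lambda>s. avg G \<Phi>)" using avg_const[OF finD DneD] by simp
  also have "\<dots> = avg D (\<lambda>s. avg G (\<lambda>h. \<Phi> (h + s)))"
    by (rule avg_cong) (rule transG[symmetric], erule inDG)
  also have "\<dots> = avg G (\<lambda>h. avg D (\<lambda>s. \<Phi> (h + s)))" by (rule avg_swap)
  also have "\<dots> = avg G (\<lambda>h. omega_pow (\<beta> h d) * avg D (\<lambda>s. md d (\<lambda>y. g (h + y)) s * omega_pow (\<beta> s d)))"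
  proof (rule avg_cong)
    fix h assume h: "h \<in> G"
    show "avg D (\<lambda>s. \<Phi> (h + s)) = omega_pow (\<beta> h d) * avg D (\<lambda>s. md d (\<lambda>y. g (h + y)) s * omega_pow (\<beta> s d))"
      unfolding avg_cmult[symmetric]
    proof (rule avg_cong)
      fix s assume s: "s \<in> D"
      have "\<beta> (h + s) d = \<beta> h d + \<beta> s d" using lin1[OF h inDG[OF s] d] .
      then have "omega_pow (\<beta> (h + s) d) = omega_pow (\<beta> h d) * omega_pow (\<beta> s d)" by (simp add: omega_add)
      moreover have "md d g (h + s) = md d (\<lambda>y. g (h + y)) s" by (simp add: md_def add.assoc)
      ultimately show "\<Phi> (h + s) = omega_pow (\<beta> h d) * (md d (\<lambda>y. g (h + y)) s * omega_pow (\<beta> s d))"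
        unfolding \<Phi>_def by (simp only: ac_simps)
    qed
  qed
  finally have eq: "avg G \<Phi> = avg G (\<lambda>h. omega_pow (\<beta> h d) * avg D (\<lambda>s. md d (\<lambda>y. g (h + y)) s * omega_pow (\<beta> s d)))" .
  show ?thesis
    using cmod_avg_sq[of G "\<lambda>h. omega_pow (\<beta> h d) * avg D (\<lambda>s. md d (\<lambda>y. g (h + y)) s * omega_pow (\<beta> s d))"]
    unfolding eq[unfolded \<Phi>_def] by (simp add: norm_mult)
qed

lemma core_main:
  assumes gb: "\<And>x. x \<in> G \<Longrightarrow> cmod (g x) \<le> 1"
  shows "\<exists>t. avg D (\<lambda>d. avg G (\<lambda>a. avg G (\<lambda>x. md a (md d g) x * omega_pow (\<beta> a d)))) = of_real t
           \<and> 0 \<le> t \<and> t\<^sup>2 \<le> P0"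
proof -
  define S where "S d = avg G (\<lambda>x. md d g x * omega_pow (\<beta> x d))" for d
  define t where "t = ravg D (\<lambda>d. (cmod (S d))\<^sup>2)"
  have "avg D (\<lambda>d. avg G (\<lambda>a. avg G (\<lambda>x. md a (md d g) x * omega_pow (\<beta> a d))))
      = avg D (\<lambda>d. S d * cnj (S d))"
    unfolding S_def by (rule avg_cong) (rule step1)
  also have "\<dots> = of_real t" unfolding t_def
    by (simp only: avg_of_real[symmetric] complex_norm_square)
  finally have 1: "avg D (\<lambda>d. avg G (\<lambda>a. avg G (\<lambda>x. md a (md d g) x * omega_pow (\<beta> a d)))) = of_real t" .
  have t0: "0 \<le> t" unfolding t_def by (rule ravg_nonneg) simp
  have "t \<le> ravg D (\<lambda>d. ravg G (\<lambda>h. (cmod (avg D (\<lambda>s. md d (\<lambda>y. g (h + y)) s * omega_pow (\<beta> s d))))\<^sup>2))"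
    unfolding t_def S_def by (rule ravg_mono) (rule step2)
  also have "\<dots> = ravg G (\<lambda>h. ravg D (\<lambda>d. (cmod (avg D (\<lambda>s. md d (\<lambda>y. g (h + y)) s * omega_pow (\<beta> s d))))\<^sup>2))"
    by (rule ravg_swap)
  also have "\<dots> \<le> ravg G (\<lambda>h. sqrt P0)"
  proof (rule ravg_mono)
    fix h assume h: "h \<in> G"
    show "ravg D (\<lambda>d. (cmod (avg D (\<lambda>s. md d (\<lambda>y. g (h + y)) s * omega_pow (\<beta> s d))))\<^sup>2) \<le> sqrt P0"
      by (rule step3) (simp add: gb addG h inDG)
  qed
  also have "\<dots> = sqrt P0" by (rule ravg_const[OF finG GneD])
  finally have "t \<le> sqrt P0" .
  then have "t\<^sup>2 \<le> (sqrt P0)\<^sup>2" using t0 by (simp add: power_mono)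
  then have "t\<^sup>2 \<le> P0" using P0_sq by simp
  then show ?thesis using 1 t0 by blast
qed

end

lemma in_listset: "xs \<in> listset As \<longleftrightarrow> length xs = length As \<and> (\<forall>l<length As. xs ! l \<in> As ! l)"
proof (induction As arbitrary: xs)
  case Nil
  then show ?case by auto
next
  case (Cons A As)
  show ?case
  proof
    assume "xs \<in> listset (A # As)"
    then obtain a ys where "xs = a # ys" "a \<in> A" "ys \<in> listset As" by (auto simp: set_Cons_def)
    then show "length xs = length (A # As) \<and> (\<forall>l<length (A # As). xs ! l \<in> (A # As) ! l)"
      using Cons.IH by (auto simp: nth_Cons split: nat.splits)
  next
    assume h: "length xs = length (A # As) \<and> (\<forall>l<length (A # As). xs ! l \<in> (A # As) ! l)"
    then obtain a ys where xs: "xs = a # ys" by (cases xs) auto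
    have "a \<in> A" using h xs by force
    moreover have "ys \<in> listset As" using h xs Cons.IH by force
    ultimately show "xs \<in> listset (A # As)" using xs by (auto simp: set_Cons_def)
  qed
qed

lemma finite_listset: "(\<And>A. A \<in> set As \<Longrightarrow> finite A) \<Longrightarrow> finite (listset As)"
proof -
  assume fin: "\<And>A. A \<in> set As \<Longrightarrow> finite A"
  have "listset As \<subseteq> {xs. set xs \<subseteq> \<Union> (set As) \<and> length xs = length As}"
    by (auto simp: in_listset in_set_conv_nth) (metis nth_mem)
  moreover have "finite {xs. set xs \<subseteq> \<Union> (set As) \<and> length xs = length As}"
    by (rule finite_lists_length_eq) (use fin in auto)
  ultimately show ?thesis by (rule finite_subset)
qed

lemma listset_update_sum:
  assumes len: "length Ws' = length Ws" and m: "m < length Ws"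
    and eq: "\<And>l. l < length Ws \<Longrightarrow> l \<noteq> m \<Longrightarrow> Ws' ! l = Ws ! l"
  shows "(\<Sum>p\<in>listset Ws' \<times> Ws ! m. F ((fst p)[m := snd p])) = (\<Sum>p\<in>listset Ws \<times> Ws' ! m. F (fst p))"
proof (rule sum.reindex_bij_witness[where j="\<lambda>(zs, a). (zs[m := a], zs ! m)" and i="\<lambda>(ys, b). (ys[m := b], ys ! m)"])
  fix p assume "p \<in> listset Ws' \<times> Ws ! m"
  then show "(case case p of (zs, a) \<Rightarrow> (zs[m := a], zs ! m) of (ys, b) \<Rightarrow> (ys[m := b], ys ! m)) = p"
    using len m by (auto simp: in_listset)
next
  fix p assume "p \<in> listset Ws' \<times> Ws ! m"
  then show "(case p of (zs, a) \<Rightarrow> (zs[m := a], zs ! m)) \<in> listset Ws \<times> Ws' ! m"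
    using len m eq by (auto simp: in_listset nth_list_update) (metis eq)
next
  fix p assume "p \<in> listset Ws \<times> Ws' ! m"
  then show "(case case p of (ys, b) \<Rightarrow> (ys[m := b], ys ! m) of (zs, a) \<Rightarrow> (zs[m := a], zs ! m)) = p"
    using len m by (auto simp: in_listset)
next
  fix p assume "p \<in> listset Ws \<times> Ws' ! m"
  then show "(case p of (ys, b) \<Rightarrow> (ys[m := b], ys ! m)) \<in> listset Ws' \<times> Ws ! m"
    using len m eq by (auto simp: in_listset nth_list_update)
next
  fix p assume "p \<in> listset Ws' \<times> Ws ! m"
  then show "F (fst (case p of (zs, a) \<Rightarrow> (zs[m := a], zs ! m))) = F ((fst p)[m := snd p])"
    by (auto split: prod.splits)
qed

lemma listset_avg_update:
  assumes len: "length Ws' = length Ws" and m: "m < length Ws"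
    and eq: "\<And>l. l < length Ws \<Longrightarrow> l \<noteq> m \<Longrightarrow> Ws' ! l = Ws ! l"
    and fin: "\<And>A. A \<in> set Ws \<Longrightarrow> finite A" "\<And>A. A \<in> set Ws' \<Longrightarrow> finite A"
    and ne: "Ws' ! m \<noteq> {}"
  shows "avg (listset Ws) F = avg (listset Ws') (\<lambda>zs. avg (Ws ! m) (\<lambda>a. F (zs[m := a])))"
proof -
  let ?L = "listset Ws" and ?L' = "listset Ws'" and ?X = "Ws ! m" and ?Y = "Ws' ! m"
  have fL: "finite ?L" "finite ?L'" using fin by (auto intro: finite_listset)
  have fX: "finite ?X" using fin m by auto
  have fY: "finite ?Y" using fin m len by auto
  have cY: "card ?Y > 0" using fY ne by (simp add: card_gt_0_iff)
  have s1: "(\<Sum>p\<in>?L' \<times> ?X. F ((fst p)[m := snd p])) = of_nat (card ?Y) * (\<Sum>ys\<in>?L. F ys)"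
  proof -
    have "(\<Sum>p\<in>?L' \<times> ?X. F ((fst p)[m := snd p])) = (\<Sum>p\<in>?L \<times> ?Y. F (fst p))"
      by (rule listset_update_sum[OF len m eq])
    also have "\<dots> = (\<Sum>ys\<in>?L. \<Sum>b\<in>?Y. F ys)"
      by (simp only: sum.cartesian_product split_def)
    also have "\<dots> = of_nat (card ?Y) * (\<Sum>ys\<in>?L. F ys)"
      by (simp add: sum_distrib_right[symmetric] mult.commute)
    finally show ?thesis .
  qed
  have s2: "card ?L' * card ?X = card ?L * card ?Y"
  proof -
    have "(\<Sum>p\<in>?L' \<times> ?X. (\<lambda>_. 1::nat) ((fst p)[m := snd p])) = (\<Sum>p\<in>?L \<times> ?Y. (\<lambda>_. 1::nat) (fst p))"
      by (rule listset_update_sum[OF len m eq])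
    then show ?thesis by (simp add: card_cartesian_product)
  qed
  have cp: "(\<Sum>zs\<in>?L'. \<Sum>a\<in>?X. F (zs[m := a])) = (\<Sum>p\<in>?L' \<times> ?X. F ((fst p)[m := snd p]))"
    by (simp only: sum.cartesian_product split_def)
  have "avg ?L' (\<lambda>zs. avg ?X (\<lambda>a. F (zs[m := a]))) = (\<Sum>zs\<in>?L'. \<Sum>a\<in>?X. F (zs[m := a])) / (of_nat (card ?L') * of_nat (card ?X))"
    unfolding avg_def by (simp add: sum_divide_distrib[symmetric] divide_divide_eq_left mult.commute)
  also have "\<dots> = (\<Sum>p\<in>?L' \<times> ?X. F ((fst p)[m := snd p])) / (of_nat (card ?L') * of_nat (card ?X))"
    unfolding cp ..
  also have "\<dots> = of_nat (card ?Y) * (\<Sum>ys\<in>?L. F ys) / (of_nat (card ?L) * of_nat (card ?Y))"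
    unfolding s1 using s2 by (metis of_nat_mult)
  also have "\<dots> = avg ?L F" unfolding avg_def using cY by simp
  finally show ?thesis by simp
qed

lemma Gsum_add: "x \<in> Gsum n k \<Longrightarrow> y \<in> Gsum n k \<Longrightarrow> x + y \<in> Gsum n k"
  by (auto simp: Gsum_def)
lemma Gsum_neg: "x \<in> Gsum n k \<Longrightarrow> - x \<in> Gsum n k"
  by (auto simp: Gsum_def)
lemma Gsum_zero: "0 \<in> Gsum n k"
  by (auto simp: Gsum_def)
lemma Gblock_add: "x \<in> Gblock n k j \<Longrightarrow> y \<in> Gblock n k j \<Longrightarrow> x + y \<in> Gblock n k j"
  by (auto simp: Gblock_def Gsum_def)
lemma Gblock_neg: "x \<in> Gblock n k j \<Longrightarrow> - x \<in> Gblock n k j"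
  by (auto simp: Gblock_def Gsum_def)
lemma Gblock_zero: "0 \<in> Gblock n k j"
  by (auto simp: Gblock_def Gsum_def)
lemma Gblock_sub: "Gblock n k j \<subseteq> Gsum n k"
  by (auto simp: Gblock_def)

lemma Gsum_finite: "finite (Gsum n k :: ('p::prime_card) vec set)"
proof -
  let ?S = "SIGMA j:{..<k}. {..<n j}"
  let ?e = "\<lambda>h::(nat \<times> nat) \<Rightarrow> 'p mod_ring. \<lambda>j t. if j < k \<and> t < n j then h (j, t) else 0"
  have "Gsum n k \<subseteq> ?e ` (?S \<rightarrow>\<^sub>E UNIV)"
  proof
    fix x :: "'p vec" assume x: "x \<in> Gsum n k"
    have "x = ?e (restrict (\<lambda>(j, t). x j t) ?S)"
    proof (intro ext)
      fix j t
      show "x j t = ?e (restrict (\<lambda>(j, t). x j t) ?S) j t"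
      proof (cases "j < k \<and> t < n j")
        case True
        then show ?thesis by simp
      next
        case False
        then have "k \<le> j \<or> n j \<le> t" by auto
        then have "x j t = 0" using x unfolding Gsum_def by blast
        then show ?thesis using False by simp
      qed
    qed
    moreover have "restrict (\<lambda>(j, t). x j t) ?S \<in> ?S \<rightarrow>\<^sub>E UNIV" by simp
    ultimately show "x \<in> ?e ` (?S \<rightarrow>\<^sub>E UNIV)" by (rule image_eqI)
  qed
  moreover have "finite (?e ` (?S \<rightarrow>\<^sub>E UNIV))" by (intro finite_imageI finite_PiE) auto
  ultimately show ?thesis by (rule finite_subset)
qed

lemma Gblock_finite: "finite (Gblock n k j :: ('p::prime_card) vec set)"
  by (rule finite_subset[OF Gblock_sub Gsum_finite])

lemma mderiv_md: "mderiv u h = md u h"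
  by (auto simp: mderiv_def md_def vadd_plus fun_eq_iff)

lemma md_comm: "md a (md b h) = md b (md a h)"
  by (auto simp: md_def fun_eq_iff ac_simps)

definition rem :: "nat \<Rightarrow> 'a list \<Rightarrow> 'a list" where
  "rem m us = take m us @ drop (Suc m) us"

lemma mderivs_rem: "m < length us \<Longrightarrow> mderivs us f = md (us ! m) (mderivs (rem m us) f)"
proof (induction us arbitrary: m)
  case Nil
  then show ?case by simp
next
  case (Cons u us)
  show ?case
  proof (cases m)
    case 0
    then show ?thesis by (simp add: rem_def mderiv_md)
  next
    case (Suc m')
    then have "m' < length us" using Cons.prems by simp
    then have "mderivs (u # us) f = md u (md (us ! m') (mderivs (rem m' us) f))"
      using Cons.IH by (simp add: mderiv_md)
    also have "\<dots> = md (us ! m') (md u (mderivs (rem m' us) f))" by (rule md_comm)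
    also have "\<dots> = md ((u # us) ! m) (mderivs (rem m (u # us)) f)"
      using Suc by (simp add: rem_def mderiv_md)
    finally show ?thesis .
  qed
qed

lemma rem_update_same: "rem m (xs[m := a]) = rem m xs"
  by (simp add: rem_def)

lemma rem_update_later: "i < q \<Longrightarrow> q < length zs \<Longrightarrow> rem i (zs[q := d]) = (rem i zs)[q - 1 := d]"
  by (rule nth_equalityI) (auto simp: rem_def nth_append nth_list_update min_def)

lemma length_rem: "m < length xs \<Longrightarrow> length (rem m xs) = length xs - 1"
  by (simp add: rem_def)

lemma set_rem: "set (rem m xs) \<subseteq> set xs"
  unfolding rem_def using set_take_subset set_drop_subset by fastforce

lemma mderivs_two:
  assumes "i < q" "q < length zs"
  shows "mderivs (zs[q := d, i := a]) f = md a (md d (mderivs (rem (q - 1) (rem i zs)) f))"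
proof -
  have l: "i < length (zs[q := d, i := a])" using assms by simp
  have li: "i < length (zs[q := d])" using assms by simp
  have ia: "zs[q := d, i := a] ! i = a" using li by (rule nth_list_update_eq)
  have 1: "mderivs (zs[q := d, i := a]) f = md a (mderivs (rem i (zs[q := d])) f)"
    using mderivs_rem[OF l, of f] unfolding ia rem_update_same .
  have 2: "rem i (zs[q := d]) = (rem i zs)[q - 1 := d]" using assms by (rule rem_update_later)
  have l2: "q - 1 < length ((rem i zs)[q - 1 := d])" using assms by (simp add: length_rem)
  have 3: "mderivs ((rem i zs)[q - 1 := d]) f = md d (mderivs (rem (q - 1) (rem i zs)) f)"
    using mderivs_rem[OF l2, of f] l2 by (simp only: rem_update_same nth_list_update_eq length_list_update)
  show ?thesis unfolding 1 2 3 ..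
qed

lemma mderivs_bound:
  assumes "set us \<subseteq> Gsum n k" "\<forall>x \<in> Gsum n k. cmod (f x) \<le> 1" "x \<in> Gsum n k"
  shows "cmod (mderivs us f x) \<le> 1"
  using assms
proof (induction us arbitrary: x)
  case Nil
  then show ?case by simp
next
  case (Cons u us)
  have "x + u \<in> Gsum n k" using Gsum_add Cons.prems by auto
  then have "cmod (mderivs us f (x + u)) \<le> 1" using Cons.IH Cons.prems by auto
  moreover have "cmod (mderivs us f x) \<le> 1" using Cons by simp
  ultimately show ?case by (simp add: mderiv_def vadd_plus norm_mult mult_le_one)
qed

context core
begin
lemma core_final:
  assumes gb: "\<And>x. x \<in> G \<Longrightarrow> cmod (g x) \<le> 1"
  shows "Im (avg D (\<lambda>d. avg G (\<lambda>a. avg G (\<lambda>x. md a (md d g) x * omega_pow (\<beta> a d))))) = 0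
    \<and> Im (avg D (\<lambda>d. avg D (\<lambda>u. omega_pow (\<beta> u d - \<beta> d u)))) = 0
    \<and> 0 \<le> Re (avg D (\<lambda>d. avg G (\<lambda>a. avg G (\<lambda>x. md a (md d g) x * omega_pow (\<beta> a d)))))
    \<and> (Re (avg D (\<lambda>d. avg G (\<lambda>a. avg G (\<lambda>x. md a (md d g) x * omega_pow (\<beta> a d))))))\<^sup>2
       \<le> Re (avg D (\<lambda>d. avg D (\<lambda>u. omega_pow (\<beta> u d - \<beta> d u))))"
proof -
  obtain t where t: "avg D (\<lambda>d. avg G (\<lambda>a. avg G (\<lambda>x. md a (md d g) x * omega_pow (\<beta> a d)))) = of_real t"
    "0 \<le> t" "t\<^sup>2 \<le> P0"
    using core_main[of g, OF gb] by blast
  show ?thesis unfolding t(1) P_eq using t(2,3) by simp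
qed
end

lemma ravg_zero: "ravg A (\<lambda>_. 0) = 0" by (simp add: ravg_def)

theorem proposition28:
  fixes n :: "nat \<Rightarrow> nat" and k r :: nat
    and f :: "('p::prime_card) vec \<Rightarrow> complex"
    and \<xi> :: real
    and \<psi> :: "'p vec list \<Rightarrow> 'p mod_ring"
    and i j :: nat
  assumes "k \<ge> 1" and "r \<ge> 1"
    and "\<forall>x \<in> Gsum n k. cmod (f x) \<le> 1"
    and "\<xi> > 0"
    and "multilinear (replicate (r - 1) (Gsum n k) @ map (Gblock n k) [0..<k]) \<psi>"
    and "let E = avg (listset (replicate (r - 1) (Gsum n k) @ map (Gblock n k) [0..<k]) \<times> Gsum n k)
                   (\<lambda>(ads, x). mderivs ads f x * omega_pow (\<psi> ads))
         in Im E = 0 \<and> Re E \<ge> \<xi>"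
    and "i < r - 1" and "j < k"
  shows "let B = bias ((replicate (r - 1) (Gsum n k) @ map (Gblock n k) [0..<k])[i := Gblock n k j])
                     (psi_prime r i j \<psi>)
         in Im B = 0 \<and> Re B \<ge> \<xi> ^ 8"
proof -
  define Vs :: "'p vec set list" where "Vs = replicate (r - 1) (Gsum n k) @ map (Gblock n k) [0..<k]"
  define Vs' where "Vs' = Vs[i := Gblock n k j]"
  define q where "q = r - 1 + j"
  define G where "G = (Gsum n k :: 'p vec set)"
  define D where "D = (Gblock n k j :: 'p vec set)"
  have lenVs: "length Vs = r - 1 + k" by (simp add: Vs_def)
  have iq: "i < q" using assms(7) by (simp add: q_def)
  have qlen: "q < length Vs" using assms(8) by (simp add: q_def lenVs)
  have ilen: "i < length Vs" using iq qlen by simp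
  have lenVs': "length Vs' = length Vs" by (simp add: Vs'_def)
  have Vsi: "Vs ! i = G" using assms(7) by (simp add: Vs_def G_def nth_append)
  have Vsq: "Vs ! q = D" using assms(8) by (simp add: Vs_def D_def q_def nth_append)
  have Vs'i: "Vs' ! i = D" using ilen by (simp add: Vs'_def D_def)
  have Vs'q: "Vs' ! q = D" using iq Vsq by (simp add: Vs'_def)
  have Vs'l: "\<And>l. l \<noteq> i \<Longrightarrow> Vs' ! l = Vs ! l" by (simp add: Vs'_def)
  have DG: "D \<subseteq> G" by (simp add: D_def G_def Gblock_sub)
  have setVs: "\<And>A. A \<in> set Vs \<Longrightarrow> finite A \<and> A \<subseteq> G \<and> 0 \<in> A"
    by (auto simp: Vs_def G_def Gsum_finite Gblock_finite Gsum_zero Gblock_zero dest: Gblock_sub[THEN subsetD])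
  have setVs': "\<And>A. A \<in> set Vs' \<Longrightarrow> finite A \<and> A \<subseteq> G \<and> 0 \<in> A"
  proof -
    fix A assume "A \<in> set Vs'"
    then have "A \<in> insert D (set Vs)" unfolding Vs'_def D_def using set_update_subset_insert by fastforce
    then show "finite A \<and> A \<subseteq> G \<and> 0 \<in> A"
      using setVs DG by (auto simp: D_def Gblock_finite Gblock_zero)
  qed
  have finG: "finite G" and finD: "finite D" by (simp_all add: G_def D_def Gsum_finite Gblock_finite)
  have L'sub: "\<And>zs. zs \<in> listset Vs' \<Longrightarrow> set zs \<subseteq> G"
  proof
    fix zs x assume zs: "zs \<in> listset Vs'" and x: "x \<in> set zs"
    then obtain l where l: "l < length zs" "x = zs ! l" by (auto simp: in_set_conv_nth)
    then have "x \<in> Vs' ! l" "l < length Vs'" using zs by (auto simp: in_listset)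
    then show "x \<in> G" using setVs' nth_mem by blast
  qed
  have upd_in: "\<And>zs a d. zs \<in> listset Vs' \<Longrightarrow> a \<in> G \<Longrightarrow> d \<in> D \<Longrightarrow> zs[q := d, i := a] \<in> listset Vs"
  proof -
    fix zs a d assume zs: "zs \<in> listset Vs'" and a: "a \<in> G" and d: "d \<in> D"
    have lz: "length zs = length Vs" and zl: "\<And>l. l < length Vs \<Longrightarrow> zs ! l \<in> Vs' ! l"
      using zs lenVs' by (auto simp: in_listset)
    show "zs[q := d, i := a] \<in> listset Vs"
      unfolding in_listset
    proof (intro conjI allI impI)
      show "length (zs[q := d, i := a]) = length Vs" using lz by simp
      fix l assume l: "l < length Vs"
      show "zs[q := d, i := a] ! l \<in> Vs ! l"
      proof (cases "l = i")
        case True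
        then show ?thesis using a Vsi lz l by simp
      next
        case False
        show ?thesis
        proof (cases "l = q")
          case True
          then show ?thesis using d Vsq lz l False by simp
        next
          case False2: False
          then show ?thesis using zl[OF l] Vs'l[OF False] False by simp
        qed
      qed
    qed
  qed
  have ml: "\<And>xs m u v. xs \<in> listset Vs \<Longrightarrow> m < length Vs \<Longrightarrow> u \<in> Vs ! m \<Longrightarrow> v \<in> Vs ! m \<Longrightarrow>
      \<psi> (xs[m := u + v]) = \<psi> (xs[m := u]) + \<psi> (xs[m := v])"
    using assms(5) unfolding multilinear_def Vs_def[symmetric] vadd_plus
    by (auto simp: in_listset list_all2_conv_all_nth)
  define H where "H ads = avg G (\<lambda>x. mderivs ads f x * omega_pow (\<psi> ads))" for ads
  define T where "T zs = avg D (\<lambda>d. avg G (\<lambda>a. H (zs[q := d, i := a])))" for zs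
  define \<beta> where "\<beta> zs a d = \<psi> (zs[q := d, i := a])" for zs a d
  define g where "g zs = mderivs (rem (q - 1) (rem i zs)) f" for zs
  define P where "P zs = avg D (\<lambda>d. avg D (\<lambda>u. omega_pow (\<beta> zs u d - \<beta> zs d u)))" for zs
  have finVs: "\<And>A. A \<in> set Vs \<Longrightarrow> finite A" and finVs': "\<And>A. A \<in> set Vs' \<Longrightarrow> finite A"
    using setVs setVs' by auto
  have Dne: "D \<noteq> {}" using Gblock_zero D_def by auto
  have E0: "avg (listset Vs \<times> G) (\<lambda>(ads, x). mderivs ads f x * omega_pow (\<psi> ads)) = avg (listset Vs') T"
  proof -
    have "avg (listset Vs \<times> G) (\<lambda>(ads, x). mderivs ads f x * omega_pow (\<psi> ads)) = avg (listset Vs) H"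
      unfolding H_def by (rule avg_prod[OF finite_listset[OF finVs] finG])
    also have "\<dots> = avg (listset Vs') (\<lambda>zs. avg (Vs ! i) (\<lambda>a. H (zs[i := a])))"
      by (rule listset_avg_update[OF lenVs' ilen Vs'l finVs finVs']) (auto simp: Vs'i Dne)
    also have "\<dots> = avg (listset Vs') (\<lambda>zs. avg (Vs' ! q) (\<lambda>d. avg (Vs ! i) (\<lambda>a. H (zs[q := d, i := a]))))"
      by (rule listset_avg_update[OF refl[of "length Vs'"] qlen[folded lenVs'] refl finVs' finVs']) (auto simp: Vs'q Dne)
    also have "\<dots> = avg (listset Vs') T" unfolding T_def Vs'q Vsi ..
    finally show ?thesis .
  qed
  have B0: "bias Vs' (psi_prime r i j \<psi>) = avg (listset Vs') P"
  proof -
    have "bias Vs' (psi_prime r i j \<psi>) = avg (listset Vs') (\<lambda>zs. avg (Vs' ! i) (\<lambda>u. omega_pow (psi_prime r i j \<psi> (zs[i := u]))))"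
      unfolding bias_def
      by (rule listset_avg_update[OF refl[of "length Vs'"] ilen[folded lenVs'] refl finVs' finVs']) (auto simp: Vs'i Dne)
    also have "\<dots> = avg (listset Vs') (\<lambda>zs. avg (Vs' ! q) (\<lambda>d. avg (Vs' ! i) (\<lambda>u. omega_pow (psi_prime r i j \<psi> (zs[q := d, i := u])))))"
      by (rule listset_avg_update[OF refl[of "length Vs'"] qlen[folded lenVs'] refl finVs' finVs']) (auto simp: Vs'q Dne)
    also have "\<dots> = avg (listset Vs') P"
    proof (rule avg_cong)
      fix zs assume zs: "zs \<in> listset Vs'"
      have lz: "length zs = length Vs" using zs lenVs' by (simp add: in_listset)
      show "avg (Vs' ! q) (\<lambda>d. avg (Vs' ! i) (\<lambda>u. omega_pow (psi_prime r i j \<psi> (zs[q := d, i := u])))) = P zs"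
        unfolding P_def Vs'q Vs'i
      proof (rule avg_cong, rule avg_cong)
        fix d u
        have qq: "r - 1 + j = q" by (simp add: q_def)
        have "zs[q := d, i := u, i := d, q := u] = zs[q := u, i := d]"
          using iq by (simp add: list_update_swap)
        moreover have "zs[q := d, i := u] ! q = d" "zs[q := d, i := u] ! i = u"
          using iq qlen lz by (simp_all add: nth_list_update)
        ultimately show "omega_pow (psi_prime r i j \<psi> (zs[q := d, i := u])) = omega_pow (\<beta> zs u d - \<beta> zs d u)"
          unfolding psi_prime_def qq \<beta>_def by simp
      qed
    qed
    finally show ?thesis .
  qed
  have pw: "\<And>zs. zs \<in> listset Vs' \<Longrightarrow> Im (T zs) = 0 \<and> Im (P zs) = 0 \<and> 0 \<le> Re (T zs) \<and> (Re (T zs))\<^sup>2 \<le> Re (P zs)"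
  proof -
    fix zs assume zs: "zs \<in> listset Vs'"
    have lz: "length zs = length Vs" using zs lenVs' by (simp add: in_listset)
    interpret c: core G D "\<beta> zs"
    proof
      show "finite G" by (rule finG)
      show "0 \<in> G" by (simp add: G_def Gsum_zero)
      show "\<And>x y. x \<in> G \<Longrightarrow> y \<in> G \<Longrightarrow> x + y \<in> G" by (simp add: G_def Gsum_add)
      show "\<And>x. x \<in> G \<Longrightarrow> - x \<in> G" by (simp add: G_def Gsum_neg)
      show "finite D" by (rule finD)
      show "0 \<in> D" by (simp add: D_def Gblock_zero)
      show "\<And>x y. x \<in> D \<Longrightarrow> y \<in> D \<Longrightarrow> x + y \<in> D" by (simp add: D_def Gblock_add)
      show "\<And>x. x \<in> D \<Longrightarrow> - x \<in> D" by (simp add: D_def Gblock_neg)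
      show "D \<subseteq> G" by (rule DG)
    next
      fix x y d assume x: "x \<in> G" and y: "y \<in> G" and d: "d \<in> D"
      have "\<psi> ((zs[q := d, i := x])[i := x + y]) = \<psi> ((zs[q := d, i := x])[i := x]) + \<psi> ((zs[q := d, i := x])[i := y])"
        by (rule ml[OF upd_in[OF zs x d] ilen]) (simp_all add: Vsi x y)
      then show "\<beta> zs (x + y) d = \<beta> zs x d + \<beta> zs y d" by (simp add: \<beta>_def)
    next
      fix x d e assume x: "x \<in> G" and d: "d \<in> D" and e: "e \<in> D"
      have "\<psi> ((zs[q := d, i := x])[q := d + e]) = \<psi> ((zs[q := d, i := x])[q := d]) + \<psi> ((zs[q := d, i := x])[q := e])"
        by (rule ml[OF upd_in[OF zs x d] qlen]) (simp_all add: Vsq d e)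
      moreover have "\<And>c. (zs[q := d, i := x])[q := c] = zs[q := c, i := x]"
        using iq by (simp add: list_update_swap)
      ultimately show "\<beta> zs x (d + e) = \<beta> zs x d + \<beta> zs x e" by (simp add: \<beta>_def)
    qed
    have gb: "\<And>x. x \<in> G \<Longrightarrow> cmod (g zs x) \<le> 1"
    proof -
      fix x assume "x \<in> G"
      moreover have "set (rem (q - 1) (rem i zs)) \<subseteq> G"
        using set_rem[of "q - 1" "rem i zs"] set_rem[of i zs] L'sub[OF zs] by blast
      ultimately show "cmod (g zs x) \<le> 1" unfolding g_def G_def
        by (intro mderivs_bound) (use assms(3) in auto)
    qed
    have "T zs = avg D (\<lambda>d. avg G (\<lambda>a. avg G (\<lambda>x. md a (md d (g zs)) x * omega_pow (\<beta> zs a d))))"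
      unfolding T_def H_def g_def \<beta>_def
      using mderivs_two[OF iq qlen[folded lz]] by simp
    then show "Im (T zs) = 0 \<and> Im (P zs) = 0 \<and> 0 \<le> Re (T zs) \<and> (Re (T zs))\<^sup>2 \<le> Re (P zs)"
      using c.core_final[OF gb] unfolding P_def by simp
  qed
  have hyp: "\<xi> \<le> Re (avg (listset Vs') T)"
  proof -
    have "\<xi> \<le> Re (avg (listset Vs \<times> G) (\<lambda>(ads, x). mderivs ads f x * omega_pow (\<psi> ads)))"
      using assms(6) unfolding Let_def Vs_def G_def by simp
    then show ?thesis using E0 by simp
  qed
  have ReT: "Re (avg (listset Vs') T) = ravg (listset Vs') (\<lambda>zs. Re (T zs))" by (rule Re_avg)
  have ImB: "Im (avg (listset Vs') P) = 0"
    unfolding Im_avg using pw by (simp add: ravg_cong[of _ _ "\<lambda>_. 0"] ravg_zero)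
  have "\<xi>\<^sup>2 \<le> (ravg (listset Vs') (\<lambda>zs. Re (T zs)))\<^sup>2"
    using hyp ReT assms(4) by (simp add: power_mono)
  also have "\<dots> \<le> ravg (listset Vs') (\<lambda>zs. (Re (T zs))\<^sup>2)" by (rule ravg_CS)
  also have "\<dots> \<le> ravg (listset Vs') (\<lambda>zs. Re (P zs))" by (rule ravg_mono) (use pw in auto)
  also have "\<dots> = Re (avg (listset Vs') P)" by (rule Re_avg[symmetric])
  finally have x2: "\<xi>\<^sup>2 \<le> Re (avg (listset Vs') P)" .
  have "cmod (bias Vs' (psi_prime r i j \<psi>)) \<le> 1"
    unfolding bias_def by (rule cmod_avg_le1) simp
  then have "Re (avg (listset Vs') P) \<le> 1" using B0 complex_Re_le_cmod by (metis order_trans)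
  then have "\<xi>\<^sup>2 \<le> 1" using x2 by simp
  then have "\<xi> \<le> 1" using assms(4) by (simp add: power_le_one_iff abs_square_le_1)
  then have "\<xi> ^ 8 \<le> \<xi>\<^sup>2" using assms(4) by (intro power_decreasing) auto
  then have fin: "\<xi> ^ 8 \<le> Re (bias Vs' (psi_prime r i j \<psi>))" using x2 B0 by simp
  have Vs'e: "(replicate (r - 1) (Gsum n k) @ map (Gblock n k) [0..<k])[i := Gblock n k j] = Vs'"
    by (simp add: Vs'_def Vs_def)
  show ?thesis unfolding Let_def Vs'e using fin ImB B0 by simp
qed

end
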